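(* Let $G$ be a graph and $W$ a walk of $G$. Let $E_o$ be the set of edges traversed by $W$ an odd number of times and $E_e$ the set of edges traversed by $W$ a non-zero even number of times. Then $W$ is equivalent to a walk $W_S$ that follows a walk $S$ of $G$ in which each edge of $E_o$ appears exactly once and each edge of $E_e$ appears at most twice.
   Context: A walk of a graph $G$ is a sequence of vertices $u_0u_1\dots u_l$ with $u_tu_{t+1}\in E(G)$ for all $t$ (vertices and edges may repeat). A walk $W'$ follows the walk $W=u_0\dots u_l$ if there are non-negative integers $i_0,\dots,i_{l-1}$ such that $W'=u_0(u_1u_0)^{i_0}u_1(u_2u_1)^{i_1}\dots u_{l-1}(u_lu_{l-1})^{i_{l-1}}u_l$, where $(u_{t+1}u_t)^{i}$ denotes $i$ successive half-turns (going from $u_t$ to $u_{t+1}$ and back) inserted after $u_t$; i.e., $W'$ is obtained by traversing $W$ from start to end and inserting half-turns $u_{t+1}u_tu_{t+1}$ along the edges. Two walks are equivalent if their multisets of traversed edges are equal. *)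

theory Defs
  imports Main "HOL-Library.Multiset"
begin

definition graph :: "'a set \<Rightarrow> 'a set set \<Rightarrow> bool" where
  "graph V E \<longleftrightarrow> (\<forall>e\<in>E. e \<subseteq> V \<and> card e = 2)"

definition walk :: "'a set \<Rightarrow> 'a set set \<Rightarrow> 'a list \<Rightarrow> bool" where
  "walk V E W \<longleftrightarrow> W \<noteq> [] \<and> set W \<subseteq> V \<and>
     (\<forall>i. Suc i < length W \<longrightarrow> {W ! i, W ! Suc i} \<in> E)"

definition walk_edges :: "'a list \<Rightarrow> 'a set multiset" where
  "walk_edges W = mset (map (\<lambda>(u, v). {u, v}) (zip W (tl W)))"

text \<open>expand W is: u_0 (u_1 u_0)^{i_0} u_1 (u_2 u_1)^{i_1} ... u_l\<close>
fun expand :: "'a list \<Rightarrow> nat list \<Rightarrow> 'a list" where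
  "expand (u # v # rest) (i # is) = u # concat (replicate i [v, u]) @ expand (v # rest) is"
| "expand W is = W"

definition follows :: "'a list \<Rightarrow> 'a list \<Rightarrow> bool" where
  "follows W' W \<longleftrightarrow> (\<exists>is. length is = length W - 1 \<and> W' = expand W is)"

definition equivalent :: "'a list \<Rightarrow> 'a list \<Rightarrow> bool" where
  "equivalent W1 W2 \<longleftrightarrow> walk_edges W1 = walk_edges W2"

end

theory Submission
  imports Defs
begin

fun prs :: "'a list \<Rightarrow> ('a \<times> 'a) list" where
  "prs (u # v # T) = (u, v) # prs (v # T)"
| "prs _ = []"

lemma we_Nil[simp]: "walk_edges [] = {#}"
  by (simp add: walk_edges_def)
lemma we_single[simp]: "walk_edges [u] = {#}"
  by (simp add: walk_edges_def)
lemma we_Cons2[simp]: "walk_edges (u # v # T) = add_mset {u, v} (walk_edges (v # T))"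
  by (simp add: walk_edges_def)

lemma we_split: "walk_edges (A @ x # B) = walk_edges (A @ [x]) + walk_edges (x # B)"
proof (induction A)
  case Nil
  then show ?case by simp
next
  case (Cons a A)
  then show ?case by (cases A) auto
qed

lemma we_rev: "walk_edges (rev L) = walk_edges L"
proof (induction L rule: prs.induct)
  case (1 u v T)
  have "walk_edges (rev (u # v # T)) = walk_edges (rev T @ v # [u])" by simp
  also have "\<dots> = walk_edges (rev T @ [v]) + walk_edges [v, u]" by (rule we_split)
  also have "\<dots> = walk_edges (v # T) + {#{u, v}#}" using 1 by (simp add: insert_commute)
  finally show ?case by simp
qed auto

lemma count_we:
  assumes "a \<noteq> b"
  shows "count (walk_edges S) {a, b} = count (mset (prs S)) (a, b) + count (mset (prs S)) (b, a)"
  using assms by (induction S rule: prs.induct) (auto simp: doubleton_eq_iff)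

lemma prs_split1:
  assumes "count (mset (prs S)) (x, y) \<ge> 1"
  shows "\<exists>P R. S = P @ x # y # R"
  using assms
proof (induction S rule: prs.induct)
  case (1 u v T)
  show ?case
  proof (cases "(u, v) = (x, y)")
    case True
    then show ?thesis by auto
  next
    case False
    then have "count (mset (prs (v # T))) (x, y) \<ge> 1" using 1(2) by auto
    then obtain P R where "v # T = P @ x # y # R" using 1(1) by blast
    then have "u # v # T = (u # P) @ x # y # R" by simp
    then show ?thesis by blast
  qed
qed auto

lemma prs_split2:
  assumes "count (mset (prs S)) (x, y) \<ge> 2" and "x \<noteq> y"
  shows "\<exists>P Q R. S = P @ x # y # Q @ x # y # R"
  using assms
proof (induction S rule: prs.induct)
  case (1 u v T)
  show ?case
  proof (cases "(u, v) = (x, y)")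
    case True
    then have "count (mset (prs (v # T))) (x, y) \<ge> 1" using 1(2) by auto
    from prs_split1[OF this] obtain P R where PR: "v # T = P @ x # y # R" by blast
    show ?thesis
    proof (cases P)
      case Nil
      then show ?thesis using PR True 1(3) by auto
    next
      case (Cons p Q)
      then have "u # v # T = [] @ x # y # Q @ x # y # R" using PR True by auto
      then show ?thesis by blast
    qed
  next
    case False
    then have "count (mset (prs (v # T))) (x, y) \<ge> 2" using 1(2) by auto
    then obtain P Q R where "v # T = P @ x # y # Q @ x # y # R" using 1(1) 1(3) by blast
    then have "u # v # T = (u # P) @ x # y # Q @ x # y # R" by simp
    then show ?thesis by blast
  qed
qed auto

lemma adj_iff:
  "(\<forall>i. Suc i < length S \<longrightarrow> {S ! i, S ! Suc i} \<in> E) \<longleftrightarrow> set_mset (walk_edges S) \<subseteq> E"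
proof (induction S rule: prs.induct)
  case (1 u v T)
  have "(\<forall>i. Suc i < length (u # v # T) \<longrightarrow> {(u # v # T) ! i, (u # v # T) ! Suc i} \<in> E)
     \<longleftrightarrow> {u, v} \<in> E \<and> (\<forall>i. Suc i < length (v # T) \<longrightarrow> {(v # T) ! i, (v # T) ! Suc i} \<in> E)"
  proof
    assume H: "\<forall>i. Suc i < length (u # v # T) \<longrightarrow> {(u # v # T) ! i, (u # v # T) ! Suc i} \<in> E"
    show "{u, v} \<in> E \<and> (\<forall>i. Suc i < length (v # T) \<longrightarrow> {(v # T) ! i, (v # T) ! Suc i} \<in> E)"
    proof
      show "{u, v} \<in> E" using H[rule_format, of 0] by simp
      show "\<forall>i. Suc i < length (v # T) \<longrightarrow> {(v # T) ! i, (v # T) ! Suc i} \<in> E"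
      proof (intro allI impI)
        fix i assume "Suc i < length (v # T)"
        then show "{(v # T) ! i, (v # T) ! Suc i} \<in> E" using H[rule_format, of "Suc i"] by simp
      qed
    qed
  next
    assume H: "{u, v} \<in> E \<and> (\<forall>i. Suc i < length (v # T) \<longrightarrow> {(v # T) ! i, (v # T) ! Suc i} \<in> E)"
    show "\<forall>i. Suc i < length (u # v # T) \<longrightarrow> {(u # v # T) ! i, (u # v # T) ! Suc i} \<in> E"
    proof (intro allI impI)
      fix i assume i: "Suc i < length (u # v # T)"
      show "{(u # v # T) ! i, (u # v # T) ! Suc i} \<in> E"
      proof (cases i)
        case 0 then show ?thesis using H by simp
      next
        case (Suc j) then show ?thesis using H i by simp
      qed
    qed
  qed
  then show ?case using 1 by simp
next
  case "2_1" then show ?case by simp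
next
  case "2_2" then show ?case by simp
qed

lemma walk_iff: "walk V E S \<longleftrightarrow> S \<noteq> [] \<and> set S \<subseteq> V \<and> set_mset (walk_edges S) \<subseteq> E"
  unfolding walk_def using adj_iff by blast

lemma reduce_one:
  assumes g: "graph V E" and w: "walk V E S" and c: "count (walk_edges S) e \<ge> 3"
  shows "\<exists>S'. walk V E S' \<and> walk_edges S = walk_edges S' + {#e, e#}"
proof -
  have "count (walk_edges S) e > 0" using c by linarith
  then have "e \<in># walk_edges S" by simp
  then have "e \<in> E" using w unfolding walk_iff by blast
  then have "card e = 2" using g graph_def by blast
  then obtain a b where e: "e = {a, b}" and ab: "a \<noteq> b" by (auto simp: card_2_iff)
  have "count (mset (prs S)) (a, b) + count (mset (prs S)) (b, a) \<ge> 3"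
    using count_we[OF ab, of S] c e by simp
  then have "count (mset (prs S)) (a, b) \<ge> 2 \<or> count (mset (prs S)) (b, a) \<ge> 2" by linarith
  then obtain x y where xy: "{x, y} = e" "x \<noteq> y" "count (mset (prs S)) (x, y) \<ge> 2"
  proof
    assume "count (mset (prs S)) (a, b) \<ge> 2" then show ?thesis using that[of a b] e ab by blast
  next
    assume "count (mset (prs S)) (b, a) \<ge> 2" then show ?thesis using that[of b a] e ab
      by (simp add: insert_commute)
  qed
  from prs_split2[OF xy(3) xy(2)] obtain P Q R where S: "S = P @ x # y # Q @ x # y # R" by blast
  define S' where "S' = P @ x # rev Q @ y # R"
  have e1: "walk_edges S = walk_edges (P @ [x]) + add_mset {x, y} (walk_edges (y # Q @ [x]))
        + add_mset {x, y} (walk_edges (y # R))"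
  proof -
    have "walk_edges S = walk_edges (P @ [x]) + walk_edges (x # y # Q @ x # y # R)"
      unfolding S by (rule we_split)
    also have "walk_edges (x # y # Q @ x # y # R) = add_mset {x, y} (walk_edges ((y # Q) @ x # y # R))"
      by simp
    also have "walk_edges ((y # Q) @ x # y # R) = walk_edges (y # Q @ [x]) + walk_edges (x # y # R)"
      using we_split[of "y # Q" x "y # R"] by simp
    finally show ?thesis by simp
  qed
  have e2: "walk_edges S' = walk_edges (P @ [x]) + walk_edges (y # Q @ [x]) + walk_edges (y # R)"
  proof -
    have "walk_edges S' = walk_edges (P @ [x]) + walk_edges (x # rev Q @ y # R)"
      unfolding S'_def by (rule we_split)
    also have "walk_edges (x # rev Q @ y # R) = walk_edges ((x # rev Q) @ y # R)" by simp
    also have "\<dots> = walk_edges (x # rev Q @ [y]) + walk_edges (y # R)"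
      by (subst we_split) simp
    also have "walk_edges (x # rev Q @ [y]) = walk_edges (rev (y # Q @ [x]))" by simp
    also have "\<dots> = walk_edges (y # Q @ [x])" by (rule we_rev)
    finally show ?thesis by simp
  qed
  have eq: "walk_edges S = walk_edges S' + {#e, e#}" using e1 e2 xy(1) by simp
  have "set S' \<subseteq> set S" unfolding S S'_def by auto
  moreover have "set_mset (walk_edges S') \<subseteq> set_mset (walk_edges S)" using eq by auto
  moreover have "S' \<noteq> []" unfolding S'_def by simp
  ultimately have "walk V E S'" using w unfolding walk_iff by blast
  then show ?thesis using eq by blast
qed

lemma reduce_all:
  assumes "graph V E"
  shows "walk V E S \<Longrightarrow> walk_edges W = walk_edges S + M + M \<Longrightarrow>
    set_mset M \<subseteq> set_mset (walk_edges S) \<Longrightarrow>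
    \<exists>S' M'. walk V E S' \<and> walk_edges W = walk_edges S' + M' + M' \<and>
      set_mset M' \<subseteq> set_mset (walk_edges S') \<and> (\<forall>e. count (walk_edges S') e \<le> 2)"
proof (induction "size (walk_edges S)" arbitrary: S M rule: less_induct)
  case less
  show ?case
  proof (cases "\<forall>e. count (walk_edges S) e \<le> 2")
    case True
    then show ?thesis using less by blast
  next
    case False
    then obtain e where "\<not> count (walk_edges S) e \<le> 2" by blast
    then have "count (walk_edges S) e \<ge> 3" by linarith
    then obtain S' where S': "walk V E S'" "walk_edges S = walk_edges S' + {#e, e#}"
      using reduce_one[OF assms less(2)] by blast
    have "count (walk_edges S') e \<ge> 1" using S'(2) \<open>count (walk_edges S) e \<ge> 3\<close> by simp
    then have "count (walk_edges S') e > 0" by linarith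
    then have ein: "e \<in># walk_edges S'" by simp
    have sz: "size (walk_edges S') < size (walk_edges S)" using S'(2) by simp
    have W: "walk_edges W = walk_edges S' + add_mset e M + add_mset e M"
      using less(3) S'(2) by simp
    have sub: "set_mset (add_mset e M) \<subseteq> set_mset (walk_edges S')"
      using less(4) S'(2) ein by auto
    show ?thesis using less(1)[OF sz S'(1) W sub] .
  qed
qed

fun hw :: "'a list \<Rightarrow> nat list \<Rightarrow> 'a set multiset" where
  "hw (u # v # rest) (i # is) = replicate_mset (2 * i) {u, v} + hw (v # rest) is"
| "hw _ _ = {#}"

lemma expand_hd: "\<exists>X. expand (v # rest) is = v # X"
  by (cases "(v # rest, is)" rule: expand.cases) auto

lemma we_rep: "walk_edges (u # concat (replicate i [v, u]) @ v # X)
   = replicate_mset (2 * i) {u, v} + walk_edges (u # v # X)"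
proof (induction i)
  case 0 then show ?case by simp
next
  case (Suc i)
  have "walk_edges (u # concat (replicate (Suc i) [v, u]) @ v # X)
     = add_mset {u, v} (add_mset {v, u} (walk_edges (u # concat (replicate i [v, u]) @ v # X)))"
    by simp
  then show ?case using Suc by (simp add: insert_commute)
qed

lemma we_expand: "walk_edges (expand S is) = walk_edges S + hw S is"
proof (induction S "is" rule: expand.induct)
  case (1 u v rest i "is")
  obtain X where X: "expand (v # rest) is = v # X" using expand_hd[of v rest "is"] by blast
  have "walk_edges (expand (u # v # rest) (i # is))
      = walk_edges (u # concat (replicate i [v, u]) @ v # X)" using X by simp
  also have "\<dots> = replicate_mset (2 * i) {u, v} + add_mset {u, v} (walk_edges (v # X))"
    by (simp add: we_rep)
  also have "walk_edges (v # X) = walk_edges (v # rest) + hw (v # rest) is" using 1 X by simp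
  finally show ?case by simp
qed auto

lemma hw_exists:
  "set_mset M \<subseteq> set_mset (walk_edges S) \<Longrightarrow> \<exists>is. length is = length S - 1 \<and> hw S is = M + M"
proof (induction S arbitrary: M rule: prs.induct)
  case (1 u v T)
  define M' where "M' = filter_mset (\<lambda>e. e \<noteq> {u, v}) M"
  have "set_mset M' \<subseteq> set_mset (walk_edges (v # T))" using 1(2) unfolding M'_def by auto
  then obtain is' where is': "length is' = length (v # T) - 1" "hw (v # T) is' = M' + M'"
    using 1(1) by blast
  have "hw (u # v # T) (count M {u, v} # is') = M + M"
    using is'(2) unfolding M'_def by (simp add: multiset_eq_iff)
  then show ?case using is'(1) by (intro exI[of _ "count M {u, v} # is'"]) simp
qed auto

theorem proposition4p4:
  fixes V :: "'a set" and E :: "'a set set" and W :: "'a list"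
  assumes "graph V E" and "walk V E W"
  shows "\<exists>S WS. walk V E S \<and> follows WS S \<and> equivalent W WS \<and>
     (\<forall>e. odd (count (walk_edges W) e) \<longrightarrow> count (walk_edges S) e = 1) \<and>
     (\<forall>e. count (walk_edges W) e \<noteq> 0 \<and> even (count (walk_edges W) e)
            \<longrightarrow> count (walk_edges S) e \<le> 2)"
proof -
  obtain S M where S: "walk V E S" "walk_edges W = walk_edges S + M + M"
    "set_mset M \<subseteq> set_mset (walk_edges S)" "\<forall>e. count (walk_edges S) e \<le> 2"
    using reduce_all[OF assms(1), where S=W and M="{#}" and W=W] assms(2) by auto
  obtain ns where ns: "length ns = length S - 1" "hw S ns = M + M"
    using hw_exists[OF S(3)] by blast
  define WS where "WS = expand S ns"
  have f: "follows WS S" unfolding follows_def WS_def using ns(1) by blast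
  have eqv: "equivalent W WS" unfolding equivalent_def WS_def we_expand ns(2) S(2)
    by (simp add: add.assoc)
  have cnt: "\<And>e. count (walk_edges W) e = count (walk_edges S) e + 2 * count M e"
    using S(2) by simp
  have "\<forall>e. odd (count (walk_edges W) e) \<longrightarrow> count (walk_edges S) e = 1"
  proof (intro allI impI)
    fix e assume "odd (count (walk_edges W) e)"
    then have "odd (count (walk_edges S) e)" using cnt[of e] by simp
    moreover have "count (walk_edges S) e \<le> 2" using S(4) by blast
    ultimately show "count (walk_edges S) e = 1" by presburger
  qed
  then show ?thesis using S(1) S(4) f eqv by blast
qed

end
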